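(* For each $p\ge1$ and $N\in\mathbb N$ there exists a constant $K_N\in(1,1+\frac1N)$ such that for every $T>0$ $$\mathbb E\Bigl[\Bigl(\sup_{t\in[0,T]}Z^N(t)\Bigr)^p\Bigr]\le (2\mu)^p\exp\{pK_N^{p-1}T\}.$$ In particular, for every $p\ge1$ and $T>0$, $\sup_N\sup_{t\in[0,T]}\mathbb E[(Z^N(t))^p]<\infty$.
   Context: Model. Fix $\tau>0$, $\mu\ge 0$, $N\in\mathbb N$, and write $L=\lfloor \tau N\rfloor$. The state space is $\Omega_N=[0,\infty)^{L+1}$, with elements $x=(x_{-L},\dots,x_0)$. Define $\theta_N^\pm:\Omega_N\to\Omega_N$ by $(\theta_N^\pm x)_j=x_{j+1}$ for $-L\le j<0$, $(\theta_N^+x)_0=x_0(1+\frac1N)$, $(\theta_N^-x)_0=\max\{x_0(1-\frac{x_{-L}}{N^2}),0\}$. Let $\xi^N=(\xi^N(n))_{n\ge0}$ be the discrete-time Markov chain on $\Omega_N$ moving from $x$ to $\theta_N^+x$ or $\theta_N^-x$ with probability $1/2$ each, with $\xi^N_j(0)=\mu N$ for all $j$. Let $(\sigma_n)_{n\ge1}$ be i.i.d. Exp(1), independent of $\xi^N$, $J_0=0$, $J_n=\sigma_1+\dots+\sigma_n$, and $X^N(t)=\xi^N(n)$ for $t\in[J_n,J_{n+1})$. Define $Z^N(t)=X^N_{-L}(Nt)/N$ for $t\ge0$. *)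

theory Defs
  imports "HOL-Probability.Probability"
begin

definition LL :: "real \<Rightarrow> nat \<Rightarrow> nat" where
  "LL \<tau> N = nat \<lfloor>\<tau> * real N\<rfloor>"

text \<open>States x = (x_{-L},...,x_0) are represented as functions int => real;
  only the coordinates -L..0 are meaningful.\<close>
definition theta_plus :: "real \<Rightarrow> nat \<Rightarrow> (int \<Rightarrow> real) \<Rightarrow> (int \<Rightarrow> real)" where
  "theta_plus \<tau> N x = (\<lambda>j. if j < 0 then x (j + 1)
       else if j = 0 then x 0 * (1 + 1 / real N) else 0)"

definition theta_minus :: "real \<Rightarrow> nat \<Rightarrow> (int \<Rightarrow> real) \<Rightarrow> (int \<Rightarrow> real)" where
  "theta_minus \<tau> N x = (\<lambda>j. if j < 0 then x (j + 1)
       else if j = 0 then max (x 0 * (1 - x (- int (LL \<tau> N)) / (real N)\<^sup>2)) 0 else 0)"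

primrec xi :: "real \<Rightarrow> real \<Rightarrow> nat \<Rightarrow> (nat \<Rightarrow> bool) \<Rightarrow> nat \<Rightarrow> (int \<Rightarrow> real)" where
  "xi \<tau> \<mu> N c 0 = (\<lambda>j. if - int (LL \<tau> N) \<le> j \<and> j \<le> 0 then \<mu> * real N else 0)"
| "xi \<tau> \<mu> N c (Suc n) = (if c n then theta_plus \<tau> N (xi \<tau> \<mu> N c n)
                                   else theta_minus \<tau> N (xi \<tau> \<mu> N c n))"

text \<open>Jump times J_n = sigma_1 + ... + sigma_n, where sigma_k is s (k-1).\<close>
definition jump :: "(nat \<Rightarrow> real) \<Rightarrow> nat \<Rightarrow> real" where
  "jump s n = (\<Sum>k<n. s k)"

definition XX :: "real \<Rightarrow> real \<Rightarrow> nat \<Rightarrow> (nat \<Rightarrow> bool) \<times> (nat \<Rightarrow> real) \<Rightarrow> real \<Rightarrow> (int \<Rightarrow> real)" where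
  "XX \<tau> \<mu> N \<omega> t = xi \<tau> \<mu> N (fst \<omega>)
      (THE n. jump (snd \<omega>) n \<le> t \<and> t < jump (snd \<omega>) (Suc n))"

definition ZZ :: "real \<Rightarrow> real \<Rightarrow> nat \<Rightarrow> real \<Rightarrow> (nat \<Rightarrow> bool) \<times> (nat \<Rightarrow> real) \<Rightarrow> real" where
  "ZZ \<tau> \<mu> N t \<omega> = XX \<tau> \<mu> N \<omega> (real N * t) (- int (LL \<tau> N)) / real N"

definition Pspace :: "((nat \<Rightarrow> bool) \<times> (nat \<Rightarrow> real)) measure" where
  "Pspace = (\<Pi>\<^sub>M i\<in>UNIV. measure_pmf (bernoulli_pmf (1/2)))
            \<Otimes>\<^sub>M (\<Pi>\<^sub>M i\<in>UNIV. density lborel (exponential_density 1))"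

end

theory Submission
  imports Defs
begin

lemma PiM_prod_integral:
  assumes M: "prob_space M" and J: "finite J"
    and f: "\<And>i. i \<in> J \<Longrightarrow> f i \<in> borel_measurable M"
  shows "(\<integral>\<^sup>+x. (\<Prod>i\<in>J. f i (x i)) \<partial>PiM UNIV (\<lambda>_. M)) = (\<Prod>i\<in>J. \<integral>\<^sup>+y. f i y \<partial>M)"
proof -
  interpret P: product_prob_space "\<lambda>_. M" UNIV
    using M by (simp add: product_prob_space_def product_prob_space_axioms_def product_sigma_finite_def prob_space_imp_sigma_finite)
  have meas: "(\<lambda>y. \<Prod>i\<in>J. f i (y i)) \<in> borel_measurable (PiM J (\<lambda>_. M))"
    using f by (intro borel_measurable_prod_ennreal) (auto intro: measurable_compose[OF measurable_component_singleton])
  have "(\<integral>\<^sup>+x. (\<Prod>i\<in>J. f i (x i)) \<partial>PiM UNIV (\<lambda>_. M))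
      = (\<integral>\<^sup>+x. (\<lambda>y. \<Prod>i\<in>J. f i (y i)) (restrict x J) \<partial>PiM UNIV (\<lambda>_. M))"
    by (intro nn_integral_cong prod.cong) auto
  also have "\<dots> = (\<integral>\<^sup>+y. (\<Prod>i\<in>J. f i (y i)) \<partial>distr (PiM UNIV (\<lambda>_. M)) (PiM J (\<lambda>_. M)) (\<lambda>x. restrict x J))"
  proof -
    have T: "(\<lambda>x. restrict x J) \<in> measurable (PiM UNIV (\<lambda>_. M)) (PiM J (\<lambda>_. M))"
      by (rule measurable_restrict_subset) simp
    show ?thesis by (rule nn_integral_distr[symmetric, OF T]) (simp add: meas)
  qed
  also have "\<dots> = (\<integral>\<^sup>+y. (\<Prod>i\<in>J. f i (y i)) \<partial>PiM J (\<lambda>_. M))"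
    using J by (subst P.distr_PiM_restrict_finite) auto
  also have "\<dots> = (\<Prod>i\<in>J. \<integral>\<^sup>+y. f i y \<partial>M)"
    using J f by (intro P.product_nn_integral_prod) auto
  finally show ?thesis .
qed

lemma pair_prod_integral:
  assumes M1: "sigma_finite_measure M1" and M2: "sigma_finite_measure M2"
    and f: "f \<in> borel_measurable M1" and g: "g \<in> borel_measurable M2"
  shows "(\<integral>\<^sup>+z. f (fst z) * g (snd z) \<partial>(M1 \<Otimes>\<^sub>M M2)) = (\<integral>\<^sup>+x. f x \<partial>M1) * (\<integral>\<^sup>+y. g y \<partial>M2)"
proof -
  interpret S2: sigma_finite_measure M2 by fact
  have "(\<integral>\<^sup>+z. f (fst z) * g (snd z) \<partial>(M1 \<Otimes>\<^sub>M M2)) = (\<integral>\<^sup>+x. \<integral>\<^sup>+y. f x * g y \<partial>M2 \<partial>M1)"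
    using f g by (subst S2.nn_integral_fst[symmetric]) auto
  also have "\<dots> = (\<integral>\<^sup>+x. f x * (\<integral>\<^sup>+y. g y \<partial>M2) \<partial>M1)"
    using g by (intro nn_integral_cong nn_integral_cmult) auto
  also have "\<dots> = (\<integral>\<^sup>+x. f x \<partial>M1) * (\<integral>\<^sup>+y. g y \<partial>M2)"
    using f by (rule nn_integral_multc)
  finally show ?thesis .
qed

lemma exp_laplace:
  assumes l: "0 \<le> l"
  shows "(\<integral>\<^sup>+x. ennreal (exp (- l * x)) \<partial>density lborel (exponential_density 1)) = ennreal (1 / (1 + l))"
proof -
  have "(\<integral>\<^sup>+x. ennreal (exp (- l * x)) \<partial>density lborel (exponential_density 1))
     = (\<integral>\<^sup>+x. ennreal (exponential_density 1 x) * ennreal (exp (- l * x)) \<partial>lborel)"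
    by (subst nn_integral_density) auto
  also have "\<dots> = (\<integral>\<^sup>+x. ennreal (1 / (1 + l)) * ennreal (exponential_density (1 + l) x) \<partial>lborel)"
    using l by (intro nn_integral_cong) (auto simp: exponential_density_def ennreal_mult'[symmetric] exp_add[symmetric] field_simps)
  also have "\<dots> = ennreal (1 / (1 + l)) * (\<integral>\<^sup>+x. ennreal (exponential_density (1 + l) x) \<partial>lborel)"
    by (rule nn_integral_cmult) auto
  also have "(\<integral>\<^sup>+x. ennreal (exponential_density (1 + l) x) \<partial>lborel) = 1"
  proof -
    interpret prob_space "density lborel (exponential_density (1 + l))"
      using l by (intro prob_space_exponential_density) auto
    have "emeasure (density lborel (exponential_density (1 + l))) UNIV = 1"
      using emeasure_space_1 by simp
    then show ?thesis by (simp add: emeasure_density)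
  qed
  finally show ?thesis by simp
qed

definition Wf :: "real \<Rightarrow> (nat \<Rightarrow> bool) \<Rightarrow> nat \<Rightarrow> real" where
  "Wf a c n = (\<Prod>k<n. if c k then a else 1)"

lemma Wf_ge1: "1 \<le> a \<Longrightarrow> 1 \<le> Wf a c n"
  unfolding Wf_def by (intro prod_ge_1) auto

lemma Wf_Suc: "Wf a c (Suc n) = Wf a c n * (if c n then a else 1)"
  unfolding Wf_def by simp

lemma xi_bound:
  fixes N :: nat
  assumes N: "N \<ge> 1" and mu: "\<mu> \<ge> 0"
  shows "\<forall>j. - int (LL \<tau> N) \<le> j \<and> j \<le> 0 \<longrightarrow>
     0 \<le> xi \<tau> \<mu> N c n j \<and> xi \<tau> \<mu> N c n j \<le> \<mu> * real N * Wf (1 + 1 / real N) c n"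
proof (induction n)
  case 0
  then show ?case using mu by (simp add: Wf_def)
next
  case (Suc n)
  define a where "a = 1 + 1 / real N"
  have a1: "1 \<le> a" unfolding a_def by simp
  define B where "B = \<mu> * real N * Wf a c n"
  have B0: "0 \<le> B" unfolding B_def using mu Wf_ge1[OF a1, of c n] by simp
  have IH: "\<And>j. - int (LL \<tau> N) \<le> j \<Longrightarrow> j \<le> 0 \<Longrightarrow> 0 \<le> xi \<tau> \<mu> N c n j \<and> xi \<tau> \<mu> N c n j \<le> B"
    using Suc.IH unfolding B_def a_def by blast
  have Bs: "B \<le> \<mu> * real N * Wf a c (Suc n)"
  proof -
    have w: "Wf a c n \<le> Wf a c n * (if c n then a else 1)"
      using Wf_ge1[OF a1, of c n] a1 by (simp add: mult_le_cancel_left1)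
    have "0 \<le> \<mu> * real N" using mu by simp
    from mult_left_mono[OF w this] show ?thesis unfolding B_def Wf_Suc by (simp add: mult.assoc)
  qed
  show ?case
  proof (intro allI impI)
    fix j assume j: "- int (LL \<tau> N) \<le> j \<and> j \<le> 0"
    show "0 \<le> xi \<tau> \<mu> N c (Suc n) j \<and> xi \<tau> \<mu> N c (Suc n) j \<le> \<mu> * real N * Wf (1 + 1 / real N) c (Suc n)"
    proof (cases "j < 0")
      case True
      have "0 \<le> xi \<tau> \<mu> N c n (j+1) \<and> xi \<tau> \<mu> N c n (j+1) \<le> B" using IH j True by auto
      moreover have "xi \<tau> \<mu> N c (Suc n) j = xi \<tau> \<mu> N c n (j+1)"
        using True by (simp add: theta_plus_def theta_minus_def)
      ultimately show ?thesis using Bs unfolding a_def by simp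
    next
      case False
      then have j0: "j = 0" using j by auto
      have x0: "0 \<le> xi \<tau> \<mu> N c n 0 \<and> xi \<tau> \<mu> N c n 0 \<le> B" using IH by auto
      have xL: "0 \<le> xi \<tau> \<mu> N c n (- int (LL \<tau> N))" using IH by auto
      show ?thesis
      proof (cases "c n")
        case True
        have "xi \<tau> \<mu> N c n 0 * a \<le> B * a" using x0 a1 by (intro mult_right_mono) auto
        moreover have "B * a = \<mu> * real N * Wf a c (Suc n)" unfolding B_def Wf_Suc using True by simp
        moreover have "0 \<le> xi \<tau> \<mu> N c n 0 * a" using x0 a1 by simp
        ultimately show ?thesis using True j0 unfolding a_def by (simp add: theta_plus_def)
      next
        case False
        have f1: "1 - xi \<tau> \<mu> N c n (- int (LL \<tau> N)) / (real N)\<^sup>2 \<le> 1" using xL by simp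
        have "xi \<tau> \<mu> N c n 0 * (1 - xi \<tau> \<mu> N c n (- int (LL \<tau> N)) / (real N)\<^sup>2) \<le> xi \<tau> \<mu> N c n 0"
          using mult_left_mono[OF f1, of "xi \<tau> \<mu> N c n 0"] x0 by simp
        then have "max (xi \<tau> \<mu> N c n 0 * (1 - xi \<tau> \<mu> N c n (- int (LL \<tau> N)) / (real N)\<^sup>2)) 0 \<le> B"
          using x0 B0 by linarith
        moreover have "B = \<mu> * real N * Wf a c (Suc n)" unfolding B_def Wf_Suc using False by simp
        ultimately show ?thesis using False j0 unfolding a_def by (simp add: theta_minus_def)
      qed
    qed
  qed
qed

lemma jump_mono: "(\<And>k. 0 \<le> \<sigma> k) \<Longrightarrow> m \<le> n \<Longrightarrow> jump \<sigma> m \<le> jump \<sigma> n"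
  unfolding jump_def by (intro sum_mono2) auto

lemma the_reach:
  assumes pos: "\<And>k. 0 \<le> \<sigma> k" and t: "0 \<le> t" and k: "k < (THE n. jump \<sigma> n \<le> t \<and> t < jump \<sigma> (Suc n))"
  shows "jump \<sigma> (Suc k) \<le> t"
proof (cases "\<exists>n. jump \<sigma> n \<le> t \<and> t < jump \<sigma> (Suc n)")
  case True
  then obtain n0 where n0: "jump \<sigma> n0 \<le> t" "t < jump \<sigma> (Suc n0)" by blast
  have uniq: "m = n0" if m1: "jump \<sigma> m \<le> t" and m2: "t < jump \<sigma> (Suc m)" for m
  proof (rule ccontr)
    assume "m \<noteq> n0"
    then consider "Suc m \<le> n0" | "Suc n0 \<le> m" by linarith
    then show False
    proof cases
      case 1 
      have "jump \<sigma> (Suc m) \<le> jump \<sigma> n0" by (rule jump_mono[OF pos 1])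
      then show False using m2 n0(1) by linarith
    next
      case 2 
      have "jump \<sigma> (Suc n0) \<le> jump \<sigma> m" by (rule jump_mono[OF pos 2])
      then show False using m1 n0(2) by linarith
    qed
  qed
  have "(THE n. jump \<sigma> n \<le> t \<and> t < jump \<sigma> (Suc n)) = n0"
    by (rule the_equality) (use n0 uniq in blast)+
  then have "Suc k \<le> n0" using k by simp
  then have "jump \<sigma> (Suc k) \<le> jump \<sigma> n0" by (rule jump_mono[OF pos])
  then show ?thesis using n0 by linarith
next
  case False
  have "jump \<sigma> m \<le> t" for m
  proof (induction m)
    case 0 then show ?case using t by (simp add: jump_def)
  next
    case (Suc m)
    show ?case
    proof (rule ccontr)
      assume "\<not> jump \<sigma> (Suc m) \<le> t"
      then have "t < jump \<sigma> (Suc m)" by simp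
      then show False using False Suc.IH by blast
    qed
  qed
  then show ?thesis .
qed

definition gb :: "real \<Rightarrow> real \<Rightarrow> (nat \<Rightarrow> bool) \<times> (nat \<Rightarrow> real) \<Rightarrow> ennreal" where
  "gb A s \<omega> = 1 + (\<Sum>n. ennreal ((A - 1) * (if fst \<omega> n then 1 else 0) * Wf A (fst \<omega>) n
                     * exp ((A - 1) * (s - jump (snd \<omega>) (Suc n)))))"

lemma Wf_tele: "Wf A c n = 1 + (\<Sum>k<n. (A - 1) * (if c k then 1 else 0) * Wf A c k)"
  by (induction n) (auto simp: Wf_Suc algebra_simps, simp add: Wf_def)

lemma Wf_le_gb:
  assumes A: "1 \<le> A" and reach: "\<And>k. k < n \<Longrightarrow> jump \<sigma> (Suc k) \<le> s"
  shows "ennreal (Wf A c n) \<le> gb A s (c, \<sigma>)"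
proof -
  define f where "f k = (A - 1) * (if c k then 1 else 0) * Wf A c k * exp ((A - 1) * (s - jump \<sigma> (Suc k)))" for k
  have f0: "0 \<le> f k" for k unfolding f_def using A Wf_ge1[OF A, of c k] by simp
  have le: "(A - 1) * (if c k then 1 else 0) * Wf A c k \<le> f k" if "k < n" for k
  proof -
    have "1 \<le> exp ((A - 1) * (s - jump \<sigma> (Suc k)))" using A reach[OF that] by simp
    moreover have "0 \<le> (A - 1) * (if c k then 1 else 0) * Wf A c k" using A Wf_ge1[OF A, of c k] by simp
    ultimately show ?thesis unfolding f_def by (simp add: mult_le_cancel_left1)
  qed
  have "Wf A c n \<le> 1 + (\<Sum>k<n. f k)"
    by (subst Wf_tele) (use le in \<open>auto intro!: sum_mono\<close>)
  then have "ennreal (Wf A c n) \<le> ennreal (1 + (\<Sum>k<n. f k))" by (rule ennreal_leI)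
  also have "\<dots> = 1 + (\<Sum>k<n. ennreal (f k))"
    using f0 by (simp add: ennreal_plus sum_nonneg)
  also have "\<dots> \<le> 1 + (\<Sum>k. ennreal (f k))"
    by (intro add_left_mono sum_le_suminf) auto
  also have "\<dots> = gb A s (c, \<sigma>)" unfolding gb_def f_def by simp
  finally show ?thesis .
qed

lemma Wf_powr: "0 < a \<Longrightarrow> Wf a c n powr p = Wf (a powr p) c n"
  unfolding Wf_def prod_powr_distrib by (intro prod.cong) auto

lemma Z_pt:
  fixes N :: nat
  assumes N: "N \<ge> 1" and mu: "\<mu> \<ge> 0" and p: "p \<ge> 1" and pos: "\<And>k. 0 \<le> snd \<omega> k"
    and t: "0 \<le> t" and ts: "real N * t \<le> s"
  shows "0 \<le> ZZ \<tau> \<mu> N t \<omega> \<and> ZZ \<tau> \<mu> N t \<omega> \<le> \<mu> * Wf (1 + 1 / real N) (fst \<omega>) (THE n. jump (snd \<omega>) n \<le> real N * t \<and> real N * t < jump (snd \<omega>) (Suc n))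
         \<and> ennreal (ZZ \<tau> \<mu> N t \<omega> powr p) \<le> ennreal (\<mu> powr p) * gb ((1 + 1 / real N) powr p) s \<omega>"
proof -
  define n where "n = (THE n. jump (snd \<omega>) n \<le> real N * t \<and> real N * t < jump (snd \<omega>) (Suc n))"
  define a where "a = 1 + 1 / real N"
  have a0: "0 < a" and a1: "1 \<le> a" unfolding a_def by (auto simp: add_pos_nonneg)
  have A1: "1 \<le> a powr p" using a1 p by (simp add: ge_one_powr_ge_zero)
  have Nt: "0 \<le> real N * t" using t by simp
  have ZZ: "ZZ \<tau> \<mu> N t \<omega> = xi \<tau> \<mu> N (fst \<omega>) n (- int (LL \<tau> N)) / real N"
    unfolding ZZ_def XX_def n_def by simp
  have xb: "0 \<le> xi \<tau> \<mu> N (fst \<omega>) n (- int (LL \<tau> N)) \<and> xi \<tau> \<mu> N (fst \<omega>) n (- int (LL \<tau> N)) \<le> \<mu> * real N * Wf a (fst \<omega>) n"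
    using xi_bound[OF N mu, of \<tau> "fst \<omega>" n] unfolding a_def by auto
  have Npos: "0 < real N" using N by simp
  have Z0: "0 \<le> ZZ \<tau> \<mu> N t \<omega>" using xb Npos ZZ by simp
  have Zb: "ZZ \<tau> \<mu> N t \<omega> \<le> \<mu> * Wf a (fst \<omega>) n"
    using xb Npos ZZ by (simp add: divide_le_eq mult.commute mult.left_commute)
  have "ZZ \<tau> \<mu> N t \<omega> powr p \<le> (\<mu> * Wf a (fst \<omega>) n) powr p"
    using Z0 Zb p by (intro powr_mono2) auto
  also have "\<dots> = \<mu> powr p * Wf (a powr p) (fst \<omega>) n"
    using mu Wf_ge1[OF a1, of "fst \<omega>" n] by (simp add: powr_mult Wf_powr[OF a0])
  finally have le1: "ZZ \<tau> \<mu> N t \<omega> powr p \<le> \<mu> powr p * Wf (a powr p) (fst \<omega>) n" .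
  have reach: "jump (snd \<omega>) (Suc k) \<le> s" if "k < n" for k
    using the_reach[of "snd \<omega>" "real N * t" k] pos Nt that ts unfolding n_def by force
  have "ennreal (ZZ \<tau> \<mu> N t \<omega> powr p) \<le> ennreal (\<mu> powr p * Wf (a powr p) (fst \<omega>) n)"
    by (rule ennreal_leI[OF le1])
  also have "\<dots> = ennreal (\<mu> powr p) * ennreal (Wf (a powr p) (fst \<omega>) n)"
    using Wf_ge1[OF A1, of "fst \<omega>" n] by (intro ennreal_mult) auto
  also have "\<dots> \<le> ennreal (\<mu> powr p) * gb (a powr p) s \<omega>"
    using Wf_le_gb[OF A1 reach, where c="fst \<omega>"] by (intro mult_left_mono) auto
  finally show ?thesis using Z0 Zb unfolding a_def n_def by simp
qed

abbreviation "CP \<equiv> (\<Pi>\<^sub>M i\<in>(UNIV::nat set). measure_pmf (bernoulli_pmf (1/2)))"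
abbreviation "EP \<equiv> (\<Pi>\<^sub>M i\<in>(UNIV::nat set). density lborel (exponential_density 1))"

lemma probE: "prob_space (density lborel (exponential_density 1))"
  by (rule prob_space_exponential_density) simp

lemma int_bern:
  assumes f: "\<And>b. 0 \<le> f b"
  shows "(\<integral>\<^sup>+b. ennreal (f b) \<partial>measure_pmf (bernoulli_pmf (1/2))) = ennreal ((f True + f False) / 2)"
proof -
  have "(\<integral>\<^sup>+b. ennreal (f b) \<partial>measure_pmf (bernoulli_pmf (1/2))) = ennreal (f True) * ennreal (1/2) + ennreal (f False) * ennreal (1 - 1/2)"
    by (rule nn_integral_bernoulli_pmf) auto
  also have "ennreal (f True) * ennreal (1/2) = ennreal (f True / 2)"
    using f[of True] by (subst ennreal_mult[symmetric]) auto
  also have "ennreal (f False) * ennreal (1 - 1/2) = ennreal (f False / 2)"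
    using f[of False] by (subst ennreal_mult[symmetric]) auto
  also have "ennreal (f True / 2) + ennreal (f False / 2) = ennreal ((f True + f False) / 2)"
    using f[of True] f[of False] by (subst ennreal_plus[symmetric]) (auto simp: add_divide_distrib)
  finally show ?thesis .
qed

lemma int_coin:
  assumes A: "1 \<le> A"
  shows "(\<integral>\<^sup>+c. ennreal ((if c n then 1 else 0) * Wf A c n) \<partial>CP) = ennreal ((1/2) * ((A+1)/2)^n)"
proof -
  define F where "F k b = (if k = n then (if b then 1 else 0) else (if b then A else 1::real))" for k b
  have F0: "0 \<le> F k b" for k b unfolding F_def using A by auto
  have eq: "ennreal ((if c n then 1 else 0) * Wf A c n) = (\<Prod>k\<in>{..n}. ennreal (F k (c k)))" for c
  proof -
    have "(\<Prod>k\<in>{..n}. ennreal (F k (c k))) = ennreal (\<Prod>k\<in>{..n}. F k (c k))"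
      using F0 by (simp add: prod_ennreal)
    also have "(\<Prod>k\<in>{..n}. F k (c k)) = F n (c n) * (\<Prod>k<n. F k (c k))"
      by (simp add: lessThan_Suc_atMost[symmetric])
    also have "(\<Prod>k<n. F k (c k)) = Wf A c n"
      unfolding Wf_def F_def by (intro prod.cong) auto
    finally show ?thesis by (simp add: F_def mult.commute)
  qed
  have "(\<integral>\<^sup>+c. ennreal ((if c n then 1 else 0) * Wf A c n) \<partial>CP) = (\<integral>\<^sup>+c. (\<Prod>k\<in>{..n}. ennreal (F k (c k))) \<partial>CP)"
    by (simp add: eq)
  also have "\<dots> = (\<Prod>k\<in>{..n}. \<integral>\<^sup>+b. ennreal (F k b) \<partial>measure_pmf (bernoulli_pmf (1/2)))"
    by (rule PiM_prod_integral) (auto simp: prob_space_measure_pmf)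
  also have "\<dots> = (\<Prod>k\<in>{..n}. ennreal (if k = n then 1/2 else (A+1)/2))"
    by (intro prod.cong refl) (subst int_bern, rule F0, simp add: F_def add.commute)
  also have "\<dots> = ennreal (\<Prod>k\<in>{..n}. (if k = n then 1/2 else (A+1)/2))"
    using A by (subst prod_ennreal) auto
  also have "(\<Prod>k\<in>{..n}. (if k = n then 1/2 else (A+1)/2)) = (1/2) * ((A+1)/2)^n"
    by (simp add: lessThan_Suc_atMost[symmetric])
  finally show ?thesis .
qed

lemma int_ex:
  assumes l: "0 \<le> l"
  shows "(\<integral>\<^sup>+\<sigma>. ennreal (exp (- l * jump \<sigma> m)) \<partial>EP) = ennreal ((1/(1+l))^m)"
proof -
  have eq: "ennreal (exp (- l * jump \<sigma> m)) = (\<Prod>k<m. ennreal (exp (- l * \<sigma> k)))" for \<sigma>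
    by (simp add: prod_ennreal jump_def sum_distrib_left exp_sum)
  have "(\<integral>\<^sup>+\<sigma>. ennreal (exp (- l * jump \<sigma> m)) \<partial>EP) = (\<integral>\<^sup>+\<sigma>. (\<Prod>k<m. ennreal (exp (- l * \<sigma> k))) \<partial>EP)"
    by (intro nn_integral_cong) (rule eq)
  also have "\<dots> = (\<Prod>k<m. \<integral>\<^sup>+x. ennreal (exp (- l * x)) \<partial>density lborel (exponential_density 1))"
    by (rule PiM_prod_integral[OF probE]) auto
  also have "\<dots> = (\<Prod>k<m. ennreal (1 / (1 + l)))" by (simp only: exp_laplace[OF l])
  also have "\<dots> = ennreal ((1/(1+l))^m)" using l by (simp add: ennreal_power)
  finally show ?thesis .
qed

lemma probCP: "prob_space CP" by (intro prob_space_PiM prob_space_measure_pmf)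
lemma probEP: "prob_space EP" by (intro prob_space_PiM probE)

lemma Pspace_eq: "Pspace = CP \<Otimes>\<^sub>M EP" unfolding Pspace_def by simp

lemma probP: "prob_space Pspace"
proof -
  interpret pair_prob_space CP EP
    using probCP probEP by (simp add: pair_prob_space_def pair_sigma_finite_def prob_space_imp_sigma_finite)
  show ?thesis unfolding Pspace_eq by (rule P.prob_space_axioms)
qed

lemma coin_meas: "(\<lambda>c. ennreal ((if c n then 1 else 0) * Wf A c n)) \<in> borel_measurable CP"
  unfolding Wf_def by measurable

lemma ex_meas: "(\<lambda>\<sigma>. ennreal (exp (- l * jump \<sigma> m))) \<in> borel_measurable EP"
  unfolding jump_def by measurable

lemma term_eq:
  "ennreal ((A - 1) * (if fst \<omega> n then 1 else 0) * Wf A (fst \<omega>) n * exp ((A - 1) * (s - jump (snd \<omega>) (Suc n))))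
   = ennreal ((A - 1) * exp ((A - 1) * s)) * ((\<lambda>c. ennreal ((if c n then 1 else 0) * Wf A c n)) (fst \<omega>)
        * (\<lambda>\<sigma>. ennreal (exp (- (A - 1) * jump \<sigma> (Suc n)))) (snd \<omega>))" if "1 \<le> A"
proof -
  have W: "0 \<le> Wf A (fst \<omega>) n" using Wf_ge1[OF that] by (meson order_trans zero_le_one)
  have "exp ((A - 1) * (s - jump (snd \<omega>) (Suc n))) = exp ((A - 1) * s) * exp (- (A - 1) * jump (snd \<omega>) (Suc n))"
    by (simp add: exp_add[symmetric] algebra_simps)
  then show ?thesis using that W
    by (simp add: ennreal_mult[symmetric] mult_nonneg_nonneg)
qed

lemma int_term:
  assumes A: "1 < A"
  shows "(\<integral>\<^sup>+\<omega>. ennreal ((A - 1) * (if fst \<omega> n then 1 else 0) * Wf A (fst \<omega>) n * exp ((A - 1) * (s - jump (snd \<omega>) (Suc n)))) \<partial>Pspace)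
     = ennreal ((A - 1) * exp ((A - 1) * s) / (2 * A) * ((A + 1) / (2 * A)) ^ n)"
proof -
  have s1: "sigma_finite_measure CP" using probCP by (rule prob_space_imp_sigma_finite)
  have s2: "sigma_finite_measure EP" using probEP by (rule prob_space_imp_sigma_finite)
  have "(\<integral>\<^sup>+\<omega>. ennreal ((A - 1) * (if fst \<omega> n then 1 else 0) * Wf A (fst \<omega>) n * exp ((A - 1) * (s - jump (snd \<omega>) (Suc n)))) \<partial>Pspace)
     = (\<integral>\<^sup>+\<omega>. ennreal ((A - 1) * exp ((A - 1) * s)) * ((\<lambda>c. ennreal ((if c n then 1 else 0) * Wf A c n)) (fst \<omega>)
        * (\<lambda>\<sigma>. ennreal (exp (- (A - 1) * jump \<sigma> (Suc n)))) (snd \<omega>)) \<partial>Pspace)"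
    using A by (intro nn_integral_cong term_eq) auto
  also have "\<dots> = ennreal ((A - 1) * exp ((A - 1) * s)) * (\<integral>\<^sup>+\<omega>. (\<lambda>c. ennreal ((if c n then 1 else 0) * Wf A c n)) (fst \<omega>)
        * (\<lambda>\<sigma>. ennreal (exp (- (A - 1) * jump \<sigma> (Suc n)))) (snd \<omega>) \<partial>Pspace)"
  proof -
    have m1[measurable]: "(\<lambda>\<omega>. (\<lambda>c. ennreal ((if c n then 1 else 0) * Wf A c n)) (fst \<omega>)) \<in> borel_measurable (CP \<Otimes>\<^sub>M EP)"
      by (rule measurable_compose[OF measurable_fst coin_meas])
    have m2[measurable]: "(\<lambda>\<omega>. (\<lambda>\<sigma>. ennreal (exp (- (A - 1) * jump \<sigma> (Suc n)))) (snd \<omega>)) \<in> borel_measurable (CP \<Otimes>\<^sub>M EP)"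
      by (rule measurable_compose[OF measurable_snd ex_meas])
    show ?thesis unfolding Pspace_eq by (intro nn_integral_cmult) measurable
  qed
  also have "(\<integral>\<^sup>+\<omega>. (\<lambda>c. ennreal ((if c n then 1 else 0) * Wf A c n)) (fst \<omega>)
        * (\<lambda>\<sigma>. ennreal (exp (- (A - 1) * jump \<sigma> (Suc n)))) (snd \<omega>) \<partial>Pspace)
      = (\<integral>\<^sup>+c. ennreal ((if c n then 1 else 0) * Wf A c n) \<partial>CP) * (\<integral>\<^sup>+\<sigma>. ennreal (exp (- (A - 1) * jump \<sigma> (Suc n))) \<partial>EP)"
    unfolding Pspace_eq by (rule pair_prod_integral[OF s1 s2 coin_meas ex_meas])
  also have "\<dots> = ennreal ((1/2) * ((A+1)/2)^n) * ennreal ((1/(1+(A-1)))^(Suc n))"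
    using A by (simp only: int_coin[of A n] int_ex[of "A - 1" "Suc n"])
  also have "ennreal ((A - 1) * exp ((A - 1) * s)) * (ennreal ((1/2) * ((A+1)/2)^n) * ennreal ((1/(1+(A-1)))^(Suc n)))
     = ennreal ((A - 1) * exp ((A - 1) * s) * ((1/2) * ((A+1)/2)^n) * ((1/(1+(A-1)))^(Suc n)))"
    using A by (simp add: ennreal_mult[symmetric] mult.assoc)
  also have "(A - 1) * exp ((A - 1) * s) * ((1/2) * ((A+1)/2)^n) * ((1/(1+(A-1)))^(Suc n))
      = (A - 1) * exp ((A - 1) * s) / (2 * A) * ((A + 1) / (2 * A)) ^ n"
    using A by (simp add: power_divide field_simps)
  finally show ?thesis .
qed

lemma int_gb:
  assumes A: "1 < A"
  shows "(\<integral>\<^sup>+\<omega>. gb A s \<omega> \<partial>Pspace) = ennreal (1 + exp ((A - 1) * s))"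
proof -
  interpret P: prob_space Pspace by (rule probP)
  define t where "t = (\<lambda>n \<omega>. ennreal ((A - 1) * (if fst \<omega> n then 1 else 0) * Wf A (fst \<omega>) n * exp ((A - 1) * (s - jump (snd \<omega>) (Suc n)))))" 
  have tm: "t n \<in> borel_measurable Pspace" for n
    unfolding t_def Pspace_eq Wf_def jump_def by measurable
  have "(\<integral>\<^sup>+\<omega>. gb A s \<omega> \<partial>Pspace) = (\<integral>\<^sup>+\<omega>. 1 + (\<Sum>n. t n \<omega>) \<partial>Pspace)"
    unfolding gb_def t_def by simp
  also have "\<dots> = (\<integral>\<^sup>+\<omega>. 1 \<partial>Pspace) + (\<integral>\<^sup>+\<omega>. (\<Sum>n. t n \<omega>) \<partial>Pspace)"
    using tm by (intro nn_integral_add) auto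
  also have "(\<integral>\<^sup>+\<omega>. (\<Sum>n. t n \<omega>) \<partial>Pspace) = (\<Sum>n. \<integral>\<^sup>+\<omega>. t n \<omega> \<partial>Pspace)"
    using tm by (intro nn_integral_suminf) auto
  also have "\<dots> = (\<Sum>n. ennreal ((A - 1) * exp ((A - 1) * s) / (2 * A) * ((A + 1) / (2 * A)) ^ n))"
    unfolding t_def using int_term[OF A] by simp
  also have "\<dots> = ennreal (exp ((A - 1) * s))"
  proof -
    have r: "norm ((A + 1) / (2 * A)) < 1" using A by (simp add: field_simps)
    have "(\<lambda>n. (A - 1) * exp ((A - 1) * s) / (2 * A) * ((A + 1) / (2 * A)) ^ n) sums
          ((A - 1) * exp ((A - 1) * s) / (2 * A) * (1 / (1 - (A + 1) / (2 * A))))"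
      by (intro sums_mult geometric_sums r)
    also have "(A - 1) * exp ((A - 1) * s) / (2 * A) * (1 / (1 - (A + 1) / (2 * A))) = exp ((A - 1) * s)"
      using A by (simp add: field_simps)
    finally have "(\<lambda>n. ennreal ((A - 1) * exp ((A - 1) * s) / (2 * A) * ((A + 1) / (2 * A)) ^ n)) sums ennreal (exp ((A - 1) * s))"
      using A by (subst sums_ennreal) auto
    then show ?thesis by (rule sums_unique[symmetric])
  qed
  finally show ?thesis using P.emeasure_space_1 by (simp add: ennreal_plus)
qed

lemma gb_meas: "gb A s \<in> borel_measurable Pspace"
  unfolding gb_def Pspace_eq Wf_def jump_def by measurable

lemma AE_pos: "AE \<omega> in Pspace. \<forall>k. 0 \<le> snd \<omega> k"
proof -
  interpret pair_sigma_finite CP EP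
    using probCP probEP by (simp add: pair_sigma_finite_def prob_space_imp_sigma_finite)
  have E1: "AE x in density lborel (exponential_density 1). 0 \<le> x"
    by (subst AE_density) (auto simp: exponential_density_def not_less)
  have "AE \<omega> in Pspace. 0 \<le> snd \<omega> k" for k
  proof -
    have "AE y in EP. 0 \<le> y k"
      by (rule AE_PiM_component[where P="\<lambda>x. 0 \<le> x"]) (auto intro: probE E1)
    then have "AE x in CP. AE y in EP. 0 \<le> snd (x, y) k" by simp
    then show ?thesis unfolding Pspace_eq by (intro AE_pair_measure) measurable
  qed
  then show ?thesis by (simp add: AE_all_countable)
qed

lemma int_bound:
  assumes A: "1 < A"
  shows "(\<integral>\<^sup>+\<omega>. ennreal (\<mu> powr p) * gb A s \<omega> \<partial>Pspace) = ennreal (\<mu> powr p * (1 + exp ((A - 1) * s)))"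
  by (subst nn_integral_cmult[OF gb_meas], subst int_gb[OF A], subst ennreal_mult[symmetric]) auto

lemma K_exists:
  fixes N :: nat and p :: real
  assumes N: "N \<ge> 1" and p: "p \<ge> 1"
  shows "\<exists>K. 1 < K \<and> K < 1 + 1 / real N \<and> (1 + 1 / real N) powr p - 1 = p * K powr (p - 1) / real N"
proof -
  have lt: "1 < 1 + 1 / real N" using N by simp
  have D: "\<And>x. 1 \<le> x \<Longrightarrow> x \<le> 1 + 1 / real N \<Longrightarrow> ((\<lambda>x. x powr p) has_real_derivative p * x powr (p - 1)) (at x)"
    by (rule has_real_derivative_powr) simp
  from MVT2[OF lt D] show ?thesis by auto
qed

lemma sup_bound:
  fixes N :: nat
  assumes N: "N \<ge> 1" and mu: "\<mu> \<ge> 0" and p: "p \<ge> 1" and pos: "\<And>k. 0 \<le> snd \<omega> k" and T: "0 \<le> T"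
  shows "ennreal ((SUP t\<in>{0..T}. ZZ \<tau> \<mu> N t \<omega>) powr p) \<le> ennreal (\<mu> powr p) * gb ((1 + 1 / real N) powr p) (real N * T) \<omega>"
proof -
  define A where "A = (1 + 1 / real N) powr p"
  define g where "g = gb A (real N * T) \<omega>"
  have pt: "0 \<le> ZZ \<tau> \<mu> N t \<omega> \<and> ZZ \<tau> \<mu> N t \<omega> \<le> \<mu> * Wf (1 + 1 / real N) (fst \<omega>) (THE n. jump (snd \<omega>) n \<le> real N * t \<and> real N * t < jump (snd \<omega>) (Suc n))
         \<and> ennreal (ZZ \<tau> \<mu> N t \<omega> powr p) \<le> ennreal (\<mu> powr p) * g" if t: "t \<in> {0..T}" for t
    unfolding g_def A_def using t N by (intro Z_pt[OF N mu p pos]) (auto intro: mult_left_mono)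
  show ?thesis
  proof (cases "\<mu> = 0")
    case True
    have "ZZ \<tau> \<mu> N t \<omega> = 0" if "t \<in> {0..T}" for t using pt[OF that] True by auto
    then have "(SUP t\<in>{0..T}. ZZ \<tau> \<mu> N t \<omega>) = (SUP t\<in>{0..T}. 0::real)"
      by (intro SUP_cong) auto
    also have "\<dots> = 0" using T by simp
    finally show ?thesis by simp
  next
    case False
    then have mu0: "0 < \<mu>" using mu by simp
    show ?thesis
    proof (cases "g = \<top>")
      case True
      then show ?thesis using mu0 unfolding g_def A_def by (simp add: ennreal_mult_top)
    next
      case False
      then obtain G where G: "g = ennreal G" "0 \<le> G" by (cases g) auto
      define M where "M = \<mu> powr p * G"
      have M0: "0 \<le> M" unfolding M_def using G by simp
      have ZM: "ZZ \<tau> \<mu> N t \<omega> powr p \<le> M" if "t \<in> {0..T}" for t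
      proof -
        have "ennreal (ZZ \<tau> \<mu> N t \<omega> powr p) \<le> ennreal M"
          using pt[OF that] G unfolding M_def by (simp add: ennreal_mult)
        then show ?thesis using M0 by (simp add: ennreal_le_iff)
      qed
      define B where "B = M powr (1 / p)"
      have ZB: "ZZ \<tau> \<mu> N t \<omega> \<le> B" if "t \<in> {0..T}" for t
      proof -
        have Z0: "0 \<le> ZZ \<tau> \<mu> N t \<omega>" using pt[OF that] by simp
        have "ZZ \<tau> \<mu> N t \<omega> = (ZZ \<tau> \<mu> N t \<omega> powr p) powr (1 / p)"
          using Z0 p by (simp add: powr_powr)
        also have "\<dots> \<le> M powr (1 / p)"
          using ZM[OF that] p by (intro powr_mono2) auto
        finally show ?thesis unfolding B_def .
      qed
      have ne: "{0..T} \<noteq> {}" using T by simp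
      have S_le: "(SUP t\<in>{0..T}. ZZ \<tau> \<mu> N t \<omega>) \<le> B"
        using ne ZB by (intro cSUP_least) auto
      have S_ge: "0 \<le> (SUP t\<in>{0..T}. ZZ \<tau> \<mu> N t \<omega>)"
      proof -
        have "ZZ \<tau> \<mu> N 0 \<omega> \<le> (SUP t\<in>{0..T}. ZZ \<tau> \<mu> N t \<omega>)"
          using T ZB by (intro cSUP_upper) (auto intro!: bdd_aboveI2[where M=B])
        moreover have "0 \<le> ZZ \<tau> \<mu> N 0 \<omega>" using pt[of 0] T by simp
        ultimately show ?thesis by linarith
      qed
      have "(SUP t\<in>{0..T}. ZZ \<tau> \<mu> N t \<omega>) powr p \<le> B powr p"
        using S_le S_ge p by (intro powr_mono2) auto
      also have "B powr p = M" unfolding B_def using M0 p by (simp add: powr_powr)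
      finally have "ennreal ((SUP t\<in>{0..T}. ZZ \<tau> \<mu> N t \<omega>) powr p) \<le> ennreal M" by (rule ennreal_leI)
      also have "\<dots> = ennreal (\<mu> powr p) * g" unfolding M_def G using G by (simp add: ennreal_mult)
      finally show ?thesis unfolding g_def A_def .
    qed
  qed
qed

theorem lemma3p2:
  fixes \<tau> \<mu> :: real
  assumes "\<tau> > 0" and "\<mu> \<ge> 0"
  shows "(\<forall>p::real. p \<ge> 1 \<longrightarrow> (\<forall>N::nat. N \<ge> 1 \<longrightarrow>
            (\<exists>K. 1 < K \<and> K < 1 + 1 / real N \<and>
              (\<forall>T::real. T > 0 \<longrightarrow>
                 (\<integral>\<^sup>+ \<omega>. ennreal ((SUP t\<in>{0..T}. ZZ \<tau> \<mu> N t \<omega>) powr p) \<partial>Pspace)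
                   \<le> ennreal ((2 * \<mu>) powr p * exp (p * K powr (p - 1) * T))))))
       \<and> (\<forall>p::real. p \<ge> 1 \<longrightarrow> (\<forall>T::real. T > 0 \<longrightarrow>
            (\<exists>C::real. \<forall>N::nat. N \<ge> 1 \<longrightarrow> (\<forall>t\<in>{0..T}.
               (\<integral>\<^sup>+ \<omega>. ennreal (ZZ \<tau> \<mu> N t \<omega> powr p) \<partial>Pspace) \<le> ennreal C))))"
proof (intro conjI allI impI)
  note mu = assms(2)
  fix p :: real and N :: nat
  assume p: "1 \<le> p" and N: "1 \<le> N"
  obtain K where K: "1 < K" "K < 1 + 1 / real N" "(1 + 1 / real N) powr p - 1 = p * K powr (p - 1) / real N"
    using K_exists[OF N p] by blast
  define A where "A = (1 + 1 / real N) powr p"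
  have Kp: "0 < K powr (p - 1)" using K by simp
  have A1: "1 < A" using K(3) Kp p N unfolding A_def by (simp add: field_simps)
  have AN: "(A - 1) * real N = p * K powr (p - 1)" using K(3) N unfolding A_def by (simp add: field_simps)
  show "\<exists>K. 1 < K \<and> K < 1 + 1 / real N \<and>
              (\<forall>T::real. T > 0 \<longrightarrow>
                 (\<integral>\<^sup>+ \<omega>. ennreal ((SUP t\<in>{0..T}. ZZ \<tau> \<mu> N t \<omega>) powr p) \<partial>Pspace)
                   \<le> ennreal ((2 * \<mu>) powr p * exp (p * K powr (p - 1) * T)))"
  proof (intro exI[of _ K] conjI allI impI K(1) K(2))
    fix T :: real assume T: "T > 0"
    have "(\<integral>\<^sup>+ \<omega>. ennreal ((SUP t\<in>{0..T}. ZZ \<tau> \<mu> N t \<omega>) powr p) \<partial>Pspace)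
        \<le> (\<integral>\<^sup>+\<omega>. ennreal (\<mu> powr p) * gb A (real N * T) \<omega> \<partial>Pspace)"
      using AE_pos unfolding A_def
      by (intro nn_integral_mono_AE) (auto elim!: eventually_mono intro!: sup_bound[OF N mu p] simp: T less_imp_le)
    also have "\<dots> = ennreal (\<mu> powr p * (1 + exp ((A - 1) * (real N * T))))"
      by (rule int_bound[OF A1])
    also have "\<dots> \<le> ennreal ((2 * \<mu>) powr p * exp (p * K powr (p - 1) * T))"
    proof (rule ennreal_leI)
      define e where "e = exp (p * K powr (p - 1) * T)"
      have e: "(A - 1) * (real N * T) = p * K powr (p - 1) * T" using AN by (simp add: algebra_simps)
      have e1: "1 \<le> e" unfolding e_def using p Kp T by simp
      have two: "2 \<le> (2::real) powr p" using powr_mono[OF p, of 2] by simp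
      have "2 * e \<le> 2 powr p * e" using e1 two by (intro mult_right_mono) auto
      then have "1 + e \<le> 2 powr p * e" using e1 by linarith
      then have "\<mu> powr p * (1 + e) \<le> \<mu> powr p * (2 powr p * e)" by (intro mult_left_mono) auto
      also have "\<dots> = (2 * \<mu>) powr p * e" using mu by (simp add: powr_mult)
      finally show "\<mu> powr p * (1 + exp ((A - 1) * (real N * T))) \<le> (2 * \<mu>) powr p * exp (p * K powr (p - 1) * T)"
        unfolding e e_def .
    qed
    finally show "(\<integral>\<^sup>+ \<omega>. ennreal ((SUP t\<in>{0..T}. ZZ \<tau> \<mu> N t \<omega>) powr p) \<partial>Pspace)
        \<le> ennreal ((2 * \<mu>) powr p * exp (p * K powr (p - 1) * T))" .
  qed
next
  note mu = assms(2)
  fix p T :: real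
  assume p: "1 \<le> p" and T: "0 < T"
  show "\<exists>C::real. \<forall>N::nat. N \<ge> 1 \<longrightarrow> (\<forall>t\<in>{0..T}.
               (\<integral>\<^sup>+ \<omega>. ennreal (ZZ \<tau> \<mu> N t \<omega> powr p) \<partial>Pspace) \<le> ennreal C)"
  proof (intro exI[of _ "\<mu> powr p * (1 + exp (p * 2 powr (p - 1) * T))"] allI impI ballI)
    fix N :: nat and t assume N: "1 \<le> N" and t: "t \<in> {0..T}"
    obtain K where K: "1 < K" "K < 1 + 1 / real N" "(1 + 1 / real N) powr p - 1 = p * K powr (p - 1) / real N"
      using K_exists[OF N p] by blast
    define A where "A = (1 + 1 / real N) powr p"
    have Kp: "0 < K powr (p - 1)" using K by simp
    have A1: "1 < A" using K(3) Kp p N unfolding A_def by (simp add: field_simps)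
    have AN: "(A - 1) * real N = p * K powr (p - 1)" using K(3) N unfolding A_def by (simp add: field_simps)
    have K2: "K powr (p - 1) \<le> 2 powr (p - 1)"
    proof -
      have "1 / real N \<le> 1" using N by simp
      then have "K \<le> 2" using K(2) by linarith
      then show ?thesis using K p by (intro powr_mono2) auto
    qed
    have "(\<integral>\<^sup>+ \<omega>. ennreal (ZZ \<tau> \<mu> N t \<omega> powr p) \<partial>Pspace)
        \<le> (\<integral>\<^sup>+\<omega>. ennreal (\<mu> powr p) * gb A (real N * t) \<omega> \<partial>Pspace)"
      using AE_pos
    proof (intro nn_integral_mono_AE, elim eventually_mono)
      fix \<omega> :: "(nat \<Rightarrow> bool) \<times> (nat \<Rightarrow> real)"
      assume pos: "\<forall>k. 0 \<le> snd \<omega> k"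
      have "0 \<le> ZZ \<tau> \<mu> N t \<omega> \<and> ZZ \<tau> \<mu> N t \<omega> \<le> \<mu> * Wf (1 + 1 / real N) (fst \<omega>) (THE n. jump (snd \<omega>) n \<le> real N * t \<and> real N * t < jump (snd \<omega>) (Suc n))
         \<and> ennreal (ZZ \<tau> \<mu> N t \<omega> powr p) \<le> ennreal (\<mu> powr p) * gb ((1 + 1 / real N) powr p) (real N * t) \<omega>"
        by (rule Z_pt[OF N mu p]) (use pos t in auto)
      then show "ennreal (ZZ \<tau> \<mu> N t \<omega> powr p) \<le> ennreal (\<mu> powr p) * gb A (real N * t) \<omega>"
        unfolding A_def by blast
    qed
    also have "\<dots> = ennreal (\<mu> powr p * (1 + exp ((A - 1) * (real N * t))))"
      by (rule int_bound[OF A1])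
    also have "\<dots> \<le> ennreal (\<mu> powr p * (1 + exp (p * 2 powr (p - 1) * T)))"
    proof (rule ennreal_leI)
      have "(A - 1) * (real N * t) = p * K powr (p - 1) * t" using AN by (simp add: algebra_simps)
      also have "\<dots> \<le> p * 2 powr (p - 1) * T"
        using K2 t p Kp by (intro mult_mono) (auto intro: mult_left_mono)
      finally have "exp ((A - 1) * (real N * t)) \<le> exp (p * 2 powr (p - 1) * T)" by simp
      then show "\<mu> powr p * (1 + exp ((A - 1) * (real N * t))) \<le> \<mu> powr p * (1 + exp (p * 2 powr (p - 1) * T))"
        by (intro mult_left_mono) auto
    qed
    finally show "(\<integral>\<^sup>+ \<omega>. ennreal (ZZ \<tau> \<mu> N t \<omega> powr p) \<partial>Pspace) \<le> ennreal (\<mu> powr p * (1 + exp (p * 2 powr (p - 1) * T)))" .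
  qed
qed

end
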